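(* Let $\alpha>0$. Suppose the kernel $W(x,y,h)$ is such that $$u^{\alpha*}_\theta(y)=M f_\theta^\alpha(y)u_\theta(y)+L\quad\text{for all }y,$$ for a vector $L\in\mathbb{R}^p$ depending only on $\alpha$ and $h$, and a nonsingular $p\times p$ matrix $M$ depending on $\theta,\alpha,h$, where for each $j=1,\dots,p$ either $\int u_{\theta_j}f_\theta^{1+\alpha}=0$ or the $j$-th column of $M$ does not depend on $\theta$. Then the estimating equation for the minimum DPD$^*$ estimator is the same as that of the minimum DPD estimator, and hence the two estimators are equal.
   Context: $\{f_\theta:\theta\in\Theta\subseteq\mathbb{R}^p\}$ is a parametric family of Lebesgue densities on $\mathbb{R}$, $u_\theta=\nabla_\theta\log f_\theta$ with components $u_{\theta_j}$, and $X_1,\dots,X_n$ is a sample with empirical distribution $G_n$. $W(x,y,h)\ge0$ is a kernel with bandwidth $h>0$, a probability density in $x$ for each $y$; $f^*_\theta(x)=\int W(x,y,h)f_\theta(y)dy$, $g_n^*(x)=\frac1n\sum_iW(x,X_i,h)$, $\tilde u_\theta=\nabla_\theta\log f^*_\theta$, and $u^{\alpha*}_\theta(y)=\int\tilde u_\theta(x)\{f^*_\theta(x)\}^\alpha W(x,y,h)\,dx$. The minimum density power divergence (DPD) estimator solves $\frac1n\sum_{i=1}^nf_\theta^\alpha(X_i)u_\theta(X_i)-\int f_\theta^{1+\alpha}u_\theta=0$ (minimizing $d_\alpha(g,f_\theta)=\int f_\theta^{1+\alpha}-\frac{1+\alpha}{\alpha}\int f_\theta^\alpha g+\frac1\alpha\int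 g^{1+\alpha}$ with $g$ replaced by the empirical distribution). The minimum DPD$^*$ estimator minimizes $d_\alpha(g_n^*,f^*_\theta)$ and solves $\int(f^*_\theta)^\alpha g_n^*\tilde u_\theta-\int(f^*_\theta)^{1+\alpha}\tilde u_\theta=0$, equivalently $\frac1n\sum_{i=1}^nu^{\alpha*}_\theta(X_i)-E_\theta[u^{\alpha*}_\theta(Y)]=0$ with $Y\sim f_\theta$. *)

theory Defs
  imports "HOL-Analysis.Analysis"
begin

definition score :: "(real^'p \<Rightarrow> real \<Rightarrow> real) \<Rightarrow> real^'p \<Rightarrow> real \<Rightarrow> real^'p" where
  "score f \<theta> y = (SOME D. GDERIV (\<lambda>t. ln (f t y)) \<theta> :> D)"

definition fstar :: "(real^'p \<Rightarrow> real \<Rightarrow> real) \<Rightarrow> (real \<Rightarrow> real \<Rightarrow> real \<Rightarrow> real) \<Rightarrow> real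
    \<Rightarrow> real^'p \<Rightarrow> real \<Rightarrow> real" where
  "fstar f W h \<theta> x = (LINT y|lborel. W x y h * f \<theta> y)"

definition ustar :: "(real^'p \<Rightarrow> real \<Rightarrow> real) \<Rightarrow> (real \<Rightarrow> real \<Rightarrow> real \<Rightarrow> real) \<Rightarrow> real \<Rightarrow> real
    \<Rightarrow> real^'p \<Rightarrow> real \<Rightarrow> real^'p" where
  "ustar f W \<alpha> h \<theta> y =
     (LINT x|lborel. (fstar f W h \<theta> x powr \<alpha> * W x y h) *\<^sub>R score (fstar f W h) \<theta> x)"

definition dpd_ee :: "(real^'p \<Rightarrow> real \<Rightarrow> real) \<Rightarrow> real \<Rightarrow> (nat \<Rightarrow> real) \<Rightarrow> nat \<Rightarrow> real^'p \<Rightarrow> real^'p" where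
  "dpd_ee f \<alpha> X n \<theta> =
     (1 / real n) *\<^sub>R (\<Sum>i<n. f \<theta> (X i) powr \<alpha> *\<^sub>R score f \<theta> (X i))
     - (LINT y|lborel. f \<theta> y powr (1 + \<alpha>) *\<^sub>R score f \<theta> y)"

definition dpdstar_ee :: "(real^'p \<Rightarrow> real \<Rightarrow> real) \<Rightarrow> (real \<Rightarrow> real \<Rightarrow> real \<Rightarrow> real) \<Rightarrow> real \<Rightarrow> real
    \<Rightarrow> (nat \<Rightarrow> real) \<Rightarrow> nat \<Rightarrow> real^'p \<Rightarrow> real^'p" where
  "dpdstar_ee f W \<alpha> h X n \<theta> =
     (1 / real n) *\<^sub>R (\<Sum>i<n. ustar f W \<alpha> h \<theta> (X i))
     - (LINT y|lborel. f \<theta> y *\<^sub>R ustar f W \<alpha> h \<theta> y)"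

end

theory Submission
  imports Defs
begin

theorem lemma7:
  fixes f :: "real^'p \<Rightarrow> real \<Rightarrow> real"
    and \<Theta> :: "(real^'p) set"
    and W :: "real \<Rightarrow> real \<Rightarrow> real \<Rightarrow> real"
    and \<alpha> h :: real
    and X :: "nat \<Rightarrow> real" and n :: nat
    and M :: "real^'p \<Rightarrow> real^'p^'p" and L :: "real^'p"
  assumes alpha_pos: "\<alpha> > 0" and h_pos: "h > 0" and n_pos: "n > 0"
    and dens_nonneg: "\<And>\<theta> y. \<theta> \<in> \<Theta> \<Longrightarrow> f \<theta> y \<ge> 0"
    and dens_int: "\<And>\<theta>. \<theta> \<in> \<Theta> \<Longrightarrow> integrable lborel (f \<theta>)"
    and dens_one: "\<And>\<theta>. \<theta> \<in> \<Theta> \<Longrightarrow> (LINT y|lborel. f \<theta> y) = 1"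
    and W_nonneg: "\<And>x y. W x y h \<ge> 0"
    and W_int: "\<And>y. integrable lborel (\<lambda>x. W x y h)"
    and W_one: "\<And>y. (LINT x|lborel. W x y h) = 1"
    and reg: "\<And>\<theta>. \<theta> \<in> \<Theta> \<Longrightarrow>
               integrable lborel (\<lambda>y. f \<theta> y powr (1 + \<alpha>) *\<^sub>R score f \<theta> y)"
    and ustar_form: "\<And>\<theta> y. \<theta> \<in> \<Theta> \<Longrightarrow>
               ustar f W \<alpha> h \<theta> y = M \<theta> *v (f \<theta> y powr \<alpha> *\<^sub>R score f \<theta> y) + L"
    and M_nonsing: "\<And>\<theta>. \<theta> \<in> \<Theta> \<Longrightarrow> invertible (M \<theta>)"
    and M_cols: "\<And>j. (\<forall>\<theta>\<in>\<Theta>. (LINT y|lborel. score f \<theta> y $ j * f \<theta> y powr (1 + \<alpha>)) = 0)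
               \<or> (\<forall>\<theta>\<in>\<Theta>. \<forall>\<theta>'\<in>\<Theta>. column j (M \<theta>) = column j (M \<theta>'))"
  shows "(\<forall>\<theta>\<in>\<Theta>. dpdstar_ee f W \<alpha> h X n \<theta> = 0 \<longleftrightarrow> dpd_ee f \<alpha> X n \<theta> = 0)
       \<and> {\<theta>\<in>\<Theta>. dpdstar_ee f W \<alpha> h X n \<theta> = 0} = {\<theta>\<in>\<Theta>. dpd_ee f \<alpha> X n \<theta> = 0}"
proof -
  have key: "dpdstar_ee f W \<alpha> h X n \<theta> = M \<theta> *v dpd_ee f \<alpha> X n \<theta>" if th: "\<theta> \<in> \<Theta>" for \<theta>
  proof -
    define v where "v = (\<lambda>y. f \<theta> y powr \<alpha> *\<^sub>R score f \<theta> y)"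
    define g where "g = (\<lambda>y. f \<theta> y powr (1 + \<alpha>) *\<^sub>R score f \<theta> y)"
    have pw: "f \<theta> y *\<^sub>R v y = g y" for y
    proof -
      have "f \<theta> y * f \<theta> y powr \<alpha> = f \<theta> y powr (1 + \<alpha>)"
      proof (cases "f \<theta> y = 0")
        case True then show ?thesis using alpha_pos by simp
      next
        case False then have "f \<theta> y > 0" using dens_nonneg[OF th, of y] by simp
        then show ?thesis by (simp add: powr_add)
      qed
      then show ?thesis unfolding v_def g_def by simp
    qed
    have ig: "integrable lborel g" using reg[OF th] unfolding g_def .
    have iL: "integrable lborel (\<lambda>y. f \<theta> y *\<^sub>R L)"
      using dens_int[OF th] by (rule integrable_scaleR_left)
    have iM: "integrable lborel (\<lambda>y. M \<theta> *v g y)"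
      by (rule integrable_bounded_linear[OF matrix_vector_mul_bounded_linear ig])
    have e1: "(\<lambda>y. f \<theta> y *\<^sub>R ustar f W \<alpha> h \<theta> y) = (\<lambda>y. M \<theta> *v g y + f \<theta> y *\<^sub>R L)"
    proof
      fix y
      have "f \<theta> y *\<^sub>R ustar f W \<alpha> h \<theta> y = f \<theta> y *\<^sub>R (M \<theta> *v v y) + f \<theta> y *\<^sub>R L"
        using ustar_form[OF th] by (simp add: v_def scaleR_right_distrib)
      also have "f \<theta> y *\<^sub>R (M \<theta> *v v y) = M \<theta> *v (f \<theta> y *\<^sub>R v y)"
        by (simp add: matrix_vector_mult_scaleR)
      also have "\<dots> = M \<theta> *v g y" by (simp only: pw)
      finally show "f \<theta> y *\<^sub>R ustar f W \<alpha> h \<theta> y = M \<theta> *v g y + f \<theta> y *\<^sub>R L" .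
    qed
    have int1: "(LINT y|lborel. f \<theta> y *\<^sub>R ustar f W \<alpha> h \<theta> y) = M \<theta> *v (LINT y|lborel. g y) + L"
      unfolding e1
      by (simp add: Bochner_Integration.integral_add[OF iM iL] integral_bounded_linear[OF matrix_vector_mul_bounded_linear ig]
          integral_scaleR_left dens_int[OF th] dens_one[OF th])
    have nL: "(of_nat n :: real^'p) * L = real n *\<^sub>R L" by (simp add: scaleR_conv_of_real)
    have sum1: "(\<Sum>i<n. ustar f W \<alpha> h \<theta> (X i)) = M \<theta> *v (\<Sum>i<n. v (X i)) + real n *\<^sub>R L"
      using ustar_form[OF th] nL
      by (simp add: sum.distrib v_def matrix_vector_mul_linear linear_sum[OF matrix_vector_mul_linear])
    show ?thesis
      unfolding dpdstar_ee_def dpd_ee_def int1 sum1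
      using n_pos
      by (simp add: v_def g_def matrix_vector_mult_diff_distrib matrix_vector_mult_scaleR
          scaleR_right_distrib)
  qed
  have inj: "M \<theta> *v x = 0 \<longleftrightarrow> x = 0" if "\<theta> \<in> \<Theta>" for \<theta> x
  proof -
    from M_nonsing[OF that] obtain B where "B ** M \<theta> = mat 1" unfolding invertible_def by blast
    then have "\<forall>x. M \<theta> *v x = 0 \<longrightarrow> x = 0" using matrix_left_invertible_ker by blast
    then show ?thesis by auto
  qed
  have A: "\<forall>\<theta>\<in>\<Theta>. dpdstar_ee f W \<alpha> h X n \<theta> = 0 \<longleftrightarrow> dpd_ee f \<alpha> X n \<theta> = 0"
    using key inj by simp
  then show ?thesis by blast
qed

end
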